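(* Let $d\ge 2$, let $\mathbf f_t(z)=\frac{z^d+t}{z}\in\overline{\mathbb Q}(t)(z)$, and let $\mathbf c=\mathbf A/\mathbf B\in\overline{\mathbb Q}(t)$ with $\mathbf A,\mathbf B\in\overline{\mathbb Q}[t]$ coprime. If $\mathbf c(0)\ne 0$, then $$\widehat h_{\mathbf f}(\mathbf c)=\frac{\deg(\mathbf f_t(\mathbf c(t)))}{d}=\frac{\deg(\mathbf f_t^2(\mathbf c(t)))}{d^2}.$$
   Context: For a rational function $g\in\overline{\mathbb Q}(t)$, $\deg(g)$ is the maximum of the degrees of numerator and denominator in lowest terms. $\widehat h_{\mathbf f}(\mathbf c)=\lim_{n\to\infty}\deg(\mathbf f_t^n(\mathbf c(t)))/d^n$, where $\mathbf f_t^n$ denotes the $n$-th iterate of $z\mapsto \mathbf f_t(z)$. The condition $\mathbf c(0)\neq 0$ means $\mathbf A(0)\ne 0$. *)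

theory Defs
  imports Complex_Main "HOL-Computational_Algebra.Computational_Algebra"
    "HOL-Computational_Algebra.Normalized_Fraction" "HOL-Computational_Algebra.Field_as_Ring"
begin

text \<open>Rational functions in t over the algebraic numbers are modelled as elements of the
  fraction field of complex polynomials (\<open>complex poly fract\<close>) whose numerator and
  denominator have algebraic coefficients.\<close>

type_synonym ratfun = "complex poly fract"

definition tvar :: ratfun where
  "tvar = Fract [:0, 1:] 1"

definition rdeg :: "ratfun \<Rightarrow> nat" where
  "rdeg g = max (degree (fst (quot_of_fract g))) (degree (snd (quot_of_fract g)))"

definition fmap :: "nat \<Rightarrow> ratfun \<Rightarrow> ratfun" where
  "fmap d z = (z ^ d + tvar) / z"

definition canon_height :: "nat \<Rightarrow> ratfun \<Rightarrow> real" where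
  "canon_height d c = lim (\<lambda>n. real (rdeg ((fmap d ^^ n) c)) / real d ^ n)"

end

theory Submission
  imports Defs
begin

lemma rdeg_Fract:
  fixes P Q :: "complex poly"
  assumes "Q \<noteq> 0" "coprime P Q"
  shows "rdeg (Fract P Q) = max (degree P) (degree Q)"
proof -
  have q: "quot_of_fract (Fract P Q) = normalize_quot (P, Q)"
    using quot_of_fract_quot_to_fract[of "(P,Q)"] by (simp add: quot_to_fract_def)
  define e where "e = gcd P Q * unit_factor Q"
  note aux = normalize_quot_aux[OF assms(1), of P]
  have g: "gcd P Q = 1" using assms(2) by (simp add: coprime_iff_gcd_eq_1)
  have "is_unit (unit_factor Q)" using assms(1) by simp
  hence e0: "e \<noteq> 0" "degree e = 0" unfolding e_def g
    using is_unit_iff_degree[of "unit_factor Q"] assms(1) by auto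
  have P: "P = fst (normalize_quot (P,Q)) * e" and Q: "Q = snd (normalize_quot (P,Q)) * e"
    using aux by (simp_all add: e_def)
  have "degree P = degree (fst (normalize_quot (P,Q)))"
    by (subst P, cases "fst (normalize_quot (P,Q)) = 0") (auto simp: degree_mult_eq e0)
  moreover have "degree Q = degree (snd (normalize_quot (P,Q)))"
    by (subst Q, subst degree_mult_eq) (auto simp: e0)
  ultimately show ?thesis by (simp add: rdeg_def q)
qed

lemma Fract_pow: "b \<noteq> 0 \<Longrightarrow> Fract a b ^ n = Fract (a ^ n) (b ^ n)"
  by (induction n) (simp_all add: One_fract_def)

lemma fmap_Fract:
  fixes P Q :: "complex poly"
  assumes "d \<ge> 2" "Q \<noteq> 0" "coprime P Q" "poly P 0 \<noteq> 0"
  defines "N \<equiv> P ^ d + [:0,1:] * Q ^ d" and "D \<equiv> P * Q ^ (d - 1)"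
  shows "fmap d (Fract P Q) = Fract N D" "coprime N D" "poly N 0 \<noteq> 0" "D \<noteq> 0"
    "degree N = max (d * degree P) (d * degree Q + 1)"
    "degree D = degree P + (d - 1) * degree Q"
proof -
  have P0: "P \<noteq> 0" using assms(4) by auto
  show D0: "D \<noteq> 0" using P0 assms(2) by (simp add: D_def)
  obtain k where k: "d = Suc k" using assms(1) by (cases d) auto
  have km: "d - 1 = k" using k by simp
  have "Fract P Q ^ d + tvar = Fract N (Q ^ d)"
    using assms(2) by (simp add: N_def tvar_def Fract_pow)
  hence "fmap d (Fract P Q) = Fract (N * Q) (Q ^ d * P)"
    by (simp add: fmap_def)
  also have "\<dots> = Fract N D"
    using assms(2) P0 unfolding D_def km k by (subst eq_fract) (simp_all add: algebra_simps)
  finally show "fmap d (Fract P Q) = Fract N D" .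
  show "poly N 0 \<noteq> 0" using assms(1,4) by (simp add: N_def)
  have Pd: "P ^ d = P ^ (d - 1) * P" and Qd: "Q ^ d = Q ^ (d - 1) * Q"
    unfolding km k by (simp_all add: algebra_simps)
  have ct: "coprime [:0,1:] P"
    by (rule prime_elem_imp_coprime[OF prime_elem_linear_field_poly[of 1 0]])
       (use assms(4) dvd_iff_poly_eq_0[of 0 P] in auto)
  have "coprime P (Q ^ d)" using assms(3) by simp
  hence "coprime P ([:0,1:] * Q ^ d)" using ct
    by (intro coprime_mult_right_iff[THEN iffD2] conjI) (simp_all add: coprime_commute)
  hence "gcd P (P ^ (d - 1) * P + [:0,1:] * Q ^ d) = 1"
    by (simp only: gcd_add_mult coprime_iff_gcd_eq_1)
  hence c1: "coprime N P" unfolding N_def Pd by (simp add: coprime_iff_gcd_eq_1 gcd.commute)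
  have "N = ([:0,1:] * Q ^ (d - 1)) * Q + P ^ d" unfolding N_def
    by (subst Qd) (simp add: algebra_simps)
  moreover have "coprime Q (P ^ d)" using assms(3) by (simp add: coprime_commute)
  ultimately have "gcd Q N = 1" by (simp only: gcd_add_mult coprime_iff_gcd_eq_1)
  hence c2: "coprime N Q" by (simp add: coprime_iff_gcd_eq_1 gcd.commute)
  show "coprime N D" unfolding D_def using c1 c2 by simp
  have dP: "degree (P ^ d) = d * degree P" by (simp add: degree_power_eq P0)
  have dQ: "degree ([:0,1:] * Q ^ d) = d * degree Q + 1"
    using assms(2) by (subst degree_mult_eq) (auto simp: degree_power_eq)
  have ne: "d * degree P \<noteq> d * degree Q + 1"
  proof
    assume "d * degree P = d * degree Q + 1"
    hence "d dvd 1" by (metis dvd_add_right_iff dvd_triv_left)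
    thus False using assms(1) by simp
  qed
  show "degree N = max (d * degree P) (d * degree Q + 1)"
    unfolding N_def using ne dP dQ
    by (cases "d * degree P < d * degree Q + 1") (auto simp: degree_add_eq_left degree_add_eq_right max_def)
  show "degree D = degree P + (d - 1) * degree Q"
    unfolding D_def using P0 assms(2) by (simp add: degree_mult_eq degree_power_eq)
qed

lemma arith1:
  fixes p q d :: nat assumes "d \<ge> 2"
  shows "p + (d - 1) * q < max (d * p) (d * q + 1)"
proof (cases "p \<le> q")
  case True
  have "(d - 1) * q + p \<le> (d - 1) * q + q" using True by simp
  also have "\<dots> = d * q" using assms by (cases d) auto
  finally show ?thesis by simp
next
  case False
  have "(d - 1) * q < (d - 1) * p" using False assms by simp
  hence "p + (d - 1) * q < p + (d - 1) * p" by simp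
  also have "\<dots> = d * p" using assms by (cases d) auto
  finally show ?thesis by simp
qed

lemma arith2:
  fixes p q d :: nat assumes "d \<ge> 2" "q < p"
  shows "d * q + 1 < d * p"
proof -
  have "d * (q + 1) \<le> d * p" using assms by (intro mult_le_mono2) simp
  thus ?thesis using assms by simp
qed

lemma iter_deg:
  fixes P Q :: "complex poly"
  assumes d: "d \<ge> 2" and "Q \<noteq> 0" "coprime P Q" "poly P 0 \<noteq> 0"
  shows "\<exists>P' Q'. (fmap d ^^ Suc n) (Fract P Q) = Fract P' Q' \<and> Q' \<noteq> 0 \<and> coprime P' Q'
     \<and> poly P' 0 \<noteq> 0 \<and> degree Q' < degree P'
     \<and> degree P' = d ^ n * rdeg (fmap d (Fract P Q))"
proof (induction n)
  case 0
  note F = fmap_Fract[OF assms]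
  have lt: "degree (P * Q ^ (d - 1)) < degree (P ^ d + [:0, 1:] * Q ^ d)"
    unfolding F(5,6) by (rule arith1[OF d])
  have "rdeg (fmap d (Fract P Q)) = degree (P ^ d + [:0, 1:] * Q ^ d)"
    unfolding F(1) using rdeg_Fract[OF F(4) F(2)] lt by simp
  thus ?case using F lt by (intro exI[of _ "P ^ d + [:0, 1:] * Q ^ d"] exI[of _ "P * Q ^ (d - 1)"]) simp
next
  case (Suc n)
  then obtain P' Q' where H: "(fmap d ^^ Suc n) (Fract P Q) = Fract P' Q'" "Q' \<noteq> 0" "coprime P' Q'"
     "poly P' 0 \<noteq> 0" "degree Q' < degree P'" "degree P' = d ^ n * rdeg (fmap d (Fract P Q))"
    by blast
  note F = fmap_Fract[OF d H(2,3,4)]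
  have a2: "d * degree Q' + 1 < d * degree P'" by (rule arith2[OF d H(5)])
  have a1: "degree P' + (d - 1) * degree Q' < d * degree P'"
    using arith1[OF d, of "degree P'" "degree Q'"] a2 by simp
  have "(fmap d ^^ Suc (Suc n)) (Fract P Q) = fmap d (Fract P' Q')" using H(1) by simp
  thus ?case using F a1 a2 H(6)
    by (intro exI[of _ "P' ^ d + [:0, 1:] * Q' ^ d"] exI[of _ "P' * Q' ^ (d - 1)"]) (simp add: max_def)
qed

theorem proposition3p1:
  fixes d :: nat and A B :: "complex poly"
  assumes "d \<ge> 2"
    and "\<forall>i. algebraic (coeff A i)" and "\<forall>i. algebraic (coeff B i)"
    and "B \<noteq> 0" and "coprime A B"
    and "poly A 0 \<noteq> 0"
  shows "(\<lambda>n. real (rdeg ((fmap d ^^ n) (Fract A B))) / real d ^ n)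
            \<longlonglongrightarrow> real (rdeg (fmap d (Fract A B))) / real d
    \<and> canon_height d (Fract A B) = real (rdeg (fmap d (Fract A B))) / real d
    \<and> real (rdeg (fmap d (Fract A B))) / real d
        = real (rdeg ((fmap d ^^ 2) (Fract A B))) / real d ^ 2"
proof -
  define K where "K = rdeg (fmap d (Fract A B))"
  have R: "rdeg ((fmap d ^^ Suc n) (Fract A B)) = d ^ n * K" for n
  proof -
    obtain P' Q' where H: "(fmap d ^^ Suc n) (Fract A B) = Fract P' Q'" "Q' \<noteq> 0" "coprime P' Q'"
     "degree Q' < degree P'" "degree P' = d ^ n * K"
      using iter_deg[OF assms(1,4,5,6), of n] unfolding K_def by blast
    show ?thesis using rdeg_Fract[OF H(2,3)] H by simp
  qed
  have d0: "real d \<noteq> 0" using assms(1) by simp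
  have V: "real (rdeg ((fmap d ^^ Suc n) (Fract A B))) / real d ^ Suc n = real K / real d" for n
    unfolding R using d0 by (simp add: field_simps)
  have L: "(\<lambda>n. real (rdeg ((fmap d ^^ n) (Fract A B))) / real d ^ n) \<longlonglongrightarrow> real K / real d"
    by (rule LIMSEQ_imp_Suc) (simp only: V tendsto_const)
  moreover have "canon_height d (Fract A B) = real K / real d"
    unfolding canon_height_def using L by (rule limI)
  moreover have "real K / real d = real (rdeg ((fmap d ^^ 2) (Fract A B))) / real d ^ 2"
    using V[of 1] by (simp add: numeral_2_eq_2)
  ultimately show ?thesis unfolding K_def by simp
qed

end
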